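(* If $r$ divides $s$, then $\tau^*(n,P^{(r)}_s)\le\left(\left(\frac{r}{s}\right)^r+o(1)\right)\binom{n}{r}$, where $o(1)\to0$ as $n\to\infty$ with $r,s$ fixed.
   Context: $K^{(r)}_n$ is the ordered complete $r$-uniform hypergraph on $[n]=\{1,\dots,n\}$ with its natural order; a copy of an ordered hypergraph $H$ in $K^{(r)}_n$ is the image of $H$ under an order-preserving injection $V(H)\to[n]$. The natural path $P^{(r)}_s$ has vertices $v_1<\dots<v_s$ and edges all sets of $r$ consecutive vertices $\{v_j,\dots,v_{j+r-1}\}$, $1\le j\le s-r+1$. A fractional $H$-transversal is a function $w$ from the edges of $K^{(r)}_n$ to $[0,\infty)$ such that $\sum_{e\in E(H')}w(e)\ge1$ for every copy $H'$ of $H$ in $K^{(r)}_n$; $\tau^*(n,H)$ is the minimum of $\sum_e w(e)$ over all fractional $H$-transversals. *)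

theory Defs
  imports Complex_Main
begin

definition Kedges :: "nat \<Rightarrow> nat \<Rightarrow> nat set set" where
  "Kedges r n = {e. e \<subseteq> {1..n} \<and> card e = r}"

text \<open>An ordered hypergraph is given by a vertex set {1..k} (natural order) and an edge set EH.
  The natural r-uniform path on {1..s}: edges are the r consecutive vertices.\<close>
definition path_edges :: "nat \<Rightarrow> nat \<Rightarrow> nat set set" where
  "path_edges r s = {{j..j + r - 1} | j. 1 \<le> j \<and> j + r - 1 \<le> s}"

text \<open>Copies of H (on {1..k}, edges EH) in K_n: images under order-preserving injections
  f : {1..k} \<rightarrow> {1..n}.\<close>
definition frac_transversal ::
    "nat \<Rightarrow> nat \<Rightarrow> nat \<Rightarrow> nat set set \<Rightarrow> (nat set \<Rightarrow> real) \<Rightarrow> bool" where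
  "frac_transversal r n k EH w \<longleftrightarrow>
     (\<forall>e\<in>Kedges r n. 0 \<le> w e) \<and>
     (\<forall>f. strict_mono_on {1..k} f \<and> f ` {1..k} \<subseteq> {1..n} \<longrightarrow>
          1 \<le> (\<Sum>e\<in>(\<lambda>E. f ` E) ` EH. w e))"

definition tau_star :: "nat \<Rightarrow> nat \<Rightarrow> nat \<Rightarrow> nat set set \<Rightarrow> real" where
  "tau_star r n k EH = Inf {\<Sum>e\<in>Kedges r n. w e | w. frac_transversal r n k EH w}"

end

theory Submission
  imports Defs
begin

lemma const_chain:
  fixes g :: "nat \<Rightarrow> nat"
  assumes "a \<le> b" "\<And>t. a \<le> t \<Longrightarrow> t < b \<Longrightarrow> g t = g (Suc t)"
  shows "g a = g b"
  using assms
proof (induction b rule: dec_induct)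
  case base then show ?case by simp
next
  case (step b) then show ?case by (metis less_Suc_eq)
qed

lemma jumps_card:
  fixes g :: "nat \<Rightarrow> nat"
  assumes "a \<le> b" "\<And>x y. a \<le> x \<Longrightarrow> x \<le> y \<Longrightarrow> y \<le> b \<Longrightarrow> g x \<le> g y"
  shows "card {t\<in>{a..<b}. g t \<noteq> g (Suc t)} \<le> g b - g a"
  using assms
proof (induction b rule: dec_induct)
  case base then show ?case by simp
next
  case (step b)
  have IH: "card {t\<in>{a..<b}. g t \<noteq> g (Suc t)} \<le> g b - g a"
    using step by auto
  have m1: "g a \<le> g b" using step by auto
  have m2: "g b \<le> g (Suc b)" using step by auto
  show ?case
  proof (cases "g b = g (Suc b)")
    case True
    then have "{t\<in>{a..<Suc b}. g t \<noteq> g (Suc t)} = {t\<in>{a..<b}. g t \<noteq> g (Suc t)}"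
      by (auto simp: less_Suc_eq)
    then show ?thesis using IH True by simp
  next
    case False
    then have "{t\<in>{a..<Suc b}. g t \<noteq> g (Suc t)} = insert b {t\<in>{a..<b}. g t \<noteq> g (Suc t)}"
      using step by (auto simp: less_Suc_eq)
    then have "card {t\<in>{a..<Suc b}. g t \<noteq> g (Suc t)} = Suc (card {t\<in>{a..<b}. g t \<noteq> g (Suc t)})"
      by simp
    then show ?thesis using IH False m1 m2 by simp
  qed
qed

lemma good_count:
  fixes g :: "nat \<Rightarrow> nat"
  assumes r: "1 \<le> r" and m: "1 \<le> m" and s: "s = m * r"
    and mono: "\<And>x y. 1 \<le> x \<Longrightarrow> x \<le> y \<Longrightarrow> y \<le> s \<Longrightarrow> g x \<le> g y"
    and top: "g s < m"
  shows "m \<le> card {j\<in>{1..s+1-r}. g j = g (j+r-1)}"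
proof -
  define J where "J = {t\<in>{1..<s}. g t \<noteq> g (Suc t)}"
  define W where "W = {1..s+1-r}"
  define Bad where "Bad = {j\<in>W. g j \<noteq> g (j+r-1)}"
  define Good where "Good = {j\<in>W. g j = g (j+r-1)}"
  have rs: "r \<le> s" using s m by simp
  have cJ: "card J \<le> g s - g 1"
    unfolding J_def using jumps_card[of 1 s g] mono rs r by fastforce
  then have cJ': "card J \<le> m - 1" using top by linarith
  have sub: "Bad \<subseteq> (\<Union>t\<in>J. {j. j \<le> t \<and> t < j + (r - 1)})"
  proof
    fix j assume j: "j \<in> Bad"
    then have j1: "1 \<le> j" "j + r - 1 \<le> s" "g j \<noteq> g (j + r - 1)"
      unfolding Bad_def W_def using r by auto
    have "\<exists>t. j \<le> t \<and> t < j + r - 1 \<and> g t \<noteq> g (Suc t)"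
    proof (rule ccontr)
      assume "\<not> ?thesis"
      then have "g j = g (j + r - 1)" using r by (intro const_chain[of j "j+r-1" g]) auto
      then show False using j1 by simp
    qed
    then obtain t where t: "j \<le> t" "t < j + r - 1" "g t \<noteq> g (Suc t)" by blast
    have "t \<in> J" unfolding J_def using t j1 by auto
    then show "j \<in> (\<Union>t\<in>J. {j. j \<le> t \<and> t < j + (r - 1)})" using t r by auto
  qed
  have cw: "card {j. j \<le> t \<and> t < j + (r - 1)} \<le> r - 1" for t
  proof -
    have "{j. j \<le> t \<and> t < j + (r - 1)} \<subseteq> (\<lambda>k. t - k) ` {..<r-1}"
    proof
      fix j assume "j \<in> {j. j \<le> t \<and> t < j + (r - 1)}"
      then have "j = t - (t - j)" "t - j < r - 1" by auto
      then show "j \<in> (\<lambda>k. t - k) ` {..<r-1}" by blast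
    qed
    then have "card {j. j \<le> t \<and> t < j + (r - 1)} \<le> card ((\<lambda>k. t - k) ` {..<r-1})"
      by (intro card_mono) auto
    also have "\<dots> \<le> r - 1" using card_image_le[of "{..<r-1}" "\<lambda>k. t - k"] by simp
    finally show ?thesis .
  qed
  have finJ: "finite J" unfolding J_def by simp
  have "card Bad \<le> card (\<Union>t\<in>J. {j. j \<le> t \<and> t < j + (r - 1)})"
    by (rule card_mono[OF _ sub]) (auto simp: finJ)
  also have "\<dots> \<le> (\<Sum>t\<in>J. card {j. j \<le> t \<and> t < j + (r - 1)})"
    by (rule card_UN_le[OF finJ])
  also have "\<dots> \<le> (\<Sum>t\<in>J. r - 1)" by (rule sum_mono) (rule cw)
  also have "\<dots> = card J * (r - 1)" by simp
  also have "\<dots> \<le> (m - 1) * (r - 1)" using cJ' by simp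
  finally have cB: "card Bad \<le> (m - 1) * (r - 1)" .
  have "W = Good \<union> Bad" "Good \<inter> Bad = {}" unfolding W_def Good_def Bad_def by auto
  then have "card W = card Good + card Bad"
    by (metis W_def card_Un_disjoint finite_Un finite_atLeastAtMost)
  moreover have "card W = s + 1 - r" unfolding W_def by simp
  ultimately have "s + 1 - r \<le> card Good + (m - 1) * (r - 1)" using cB by linarith
  moreover have "s + 1 - r = m + (m - 1) * (r - 1)"
    using s r m by (cases m; cases r; simp add: algebra_simps)
  ultimately show ?thesis unfolding Good_def W_def by linarith
qed


lemma choose_ratio:
  assumes "q \<le> n" "0 < n"
  shows "real (q choose r) \<le> (real q / real n) ^ r * real (n choose r)"
proof (cases "r \<le> q")
  case False then show ?thesis by (simp add: binomial_eq_0)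
next
  case True
  then have rn: "r \<le> n" using assms by simp
  have "real (q choose r) = (\<Prod>i = 0..<r. real (q - i) / real (r - i))"
    using binomial_altdef_of_nat[OF True] by simp
  also have "\<dots> \<le> (\<Prod>i = 0..<r. (real q / real n) * (real (n - i) / real (r - i)))"
  proof (rule prod_mono)
    fix i assume i: "i \<in> {0..<r}"
    have "real (q - i) \<le> (real q / real n) * real (n - i)"
    proof -
      have "real (q - i) * real n \<le> real q * real (n - i)"
        using i True rn assms by (simp add: of_nat_diff algebra_simps mult_left_mono)
      then show ?thesis using assms by (simp add: field_simps)
    qed
    note hh = this
    show "0 \<le> real (q - i) / real (r - i) \<and>
      real (q - i) / real (r - i) \<le> (real q / real n) * (real (n - i) / real (r - i))"
    proof (intro conjI)
      show "0 \<le> real (q - i) / real (r - i)" by simp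
      have "real (q - i) / real (r - i) \<le> ((real q / real n) * real (n - i)) / real (r - i)"
        using hh by (rule divide_right_mono) simp
      then show "real (q - i) / real (r - i) \<le> (real q / real n) * (real (n - i) / real (r - i))"
        by simp
    qed
  qed
  also have "\<dots> = (real q / real n) ^ r * (\<Prod>i = 0..<r. real (n - i) / real (r - i))"
    by (simp only: prod.distrib prod_constant card_atLeastLessThan) simp
  also have "\<dots> = (real q / real n) ^ r * real (n choose r)"
    using binomial_altdef_of_nat[OF rn, where 'a=real] by simp
  finally show ?thesis .
qed

lemma asym:
  fixes m r :: nat and \<epsilon> :: real
  assumes "0 < \<epsilon>"
  shows "\<exists>N. \<forall>n\<ge>N. (1 / real m + 1 / real n) ^ r \<le> (1 / real m) ^ r + \<epsilon>"
proof -
  have "(\<lambda>n. (1 / real m + inverse (real n)) ^ r) \<longlonglongrightarrow> (1 / real m + 0) ^ r"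
    by (intro tendsto_intros lim_inverse_n)
  then have "eventually (\<lambda>n. (1 / real m + inverse (real n)) ^ r < (1 / real m) ^ r + \<epsilon>) sequentially"
    using assms by (intro order_tendstoD(2)) auto
  then obtain N where "\<forall>n\<ge>N. (1 / real m + inverse (real n)) ^ r < (1 / real m) ^ r + \<epsilon>"
    unfolding eventually_sequentially by blast
  then show ?thesis by (metis inverse_eq_divide less_imp_le)
qed


lemma tau_bound:
  assumes r: "1 \<le> r" and m: "1 \<le> m" and s: "s = m * r" and n: "1 \<le> n"
    and q: "q = (n + m - 1) div m"
  shows "tau_star r n s (path_edges r s) \<le> real (q choose r)"
proof -
  have q1: "0 < q" using q n m by (simp add: div_greater_zero_iff)
  have nq: "n - 1 < m * q"
  proof -
    have e: "m * q = (n + m - 1) - (n + m - 1) mod m"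
      unfolding q by (simp add: minus_mod_eq_mult_div)
    have "(n + m - 1) mod m < m" using m by simp
    then show ?thesis unfolding e using m n by arith
  qed
  have topb: "(n - 1) div q < m" using nq q1 by (simp add: div_less_iff_less_mult mult.commute)
  define blk where "blk x = (x - 1) div q" for x :: nat
  define w where "w e = (if e \<in> Kedges r n \<and> (\<exists>i. \<forall>x\<in>e. blk x = i) then 1 / real m else 0)"
    for e :: "nat set"
  have w0: "0 \<le> w e" for e unfolding w_def by simp
  have finK: "finite (Kedges r n)"
    by (rule finite_subset[of _ "Pow {1..n}"]) (auto simp: Kedges_def)
  have tr: "frac_transversal r n s (path_edges r s) w"
    unfolding frac_transversal_def
  proof (intro conjI allI impI ballI)
    fix e show "0 \<le> w e" by (rule w0)
  next
    fix f :: "nat \<Rightarrow> nat"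
    assume "strict_mono_on {1..s} f \<and> f ` {1..s} \<subseteq> {1..n}"
    then have sm: "strict_mono_on {1..s} f" and fr: "f ` {1..s} \<subseteq> {1..n}" by auto
    have injf: "inj_on f {1..s}" using sm by (rule strict_mono_on_imp_inj_on)
    define W where "W = {1..s+1-r}"
    define h where "h j = f ` {j..j+r-1}" for j
    have pe: "path_edges r s = (\<lambda>j. {j..j+r-1}) ` W"
    proof -
      have rs: "r \<le> s" using s m by simp
      have "\<And>j. (1 \<le> j \<and> j + r - 1 \<le> s) = (j \<in> {1..s+1-r})" using r rs by auto
      then show ?thesis unfolding path_edges_def W_def by (auto simp: image_def)
    qed
    have img: "(\<lambda>E. f ` E) ` path_edges r s = h ` W"
      unfolding pe h_def by (simp add: image_image)
    have win: "{j..j+r-1} \<subseteq> {1..s}" if "j \<in> W" for j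
      using that r unfolding W_def by auto
    have injh: "inj_on h W"
    proof (rule inj_onI)
      fix j j' assume jW: "j \<in> W" "j' \<in> W" and e: "h j = h j'"
      have a: "j \<le> j'" if "j \<in> W" "j' \<in> W" "h j = h j'" for j j'
      proof -
        have "f j' \<in> h j'" unfolding h_def using r by auto
        then have "f j' \<in> f ` {j..j+r-1}" using that unfolding h_def by simp
        then obtain x where x: "x \<in> {j..j+r-1}" "f j' = f x" by auto
        have "x \<in> {1..s}" "j' \<in> {1..s}" using x win[OF that(1)] win[OF that(2)] r by auto
        then have "x = j'" using injf x by (auto dest: inj_onD)
        then show ?thesis using x by simp
      qed
      show "j = j'" using a[OF jW e] a[OF jW(2) jW(1) e[symmetric]] by simp
    qed
    define g where "g x = blk (f x)" for x
    have gmono: "g x \<le> g y" if "1 \<le> x" "x \<le> y" "y \<le> s" for x y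
    proof -
      have "f x \<le> f y" using strict_mono_on_leD[OF sm] that by auto
      then show ?thesis unfolding g_def blk_def by (intro div_le_mono diff_le_mono)
    qed
    have gtop: "g s < m"
    proof -
      have "s \<in> {1..s}" using s m r by simp
      then have "f s \<in> {1..n}" using fr by blast
      then have "f s \<le> n" by simp
      then have "blk (f s) \<le> (n - 1) div q" unfolding blk_def by (intro div_le_mono diff_le_mono)
      then show ?thesis using topb unfolding g_def by simp
    qed
    define Good where "Good = {j\<in>W. g j = g (j+r-1)}"
    have cG: "m \<le> card Good"
      unfolding Good_def W_def using good_count[of r m s g, OF r m s gmono gtop] by simp
    have wG: "w (h j) = 1 / real m" if "j \<in> Good" for j
    proof -
      have jW: "j \<in> W" and gj: "g j = g (j+r-1)" using that unfolding Good_def by auto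
      have "h j \<subseteq> {1..n}" unfolding h_def using win[OF jW] fr by auto
      moreover have "card (h j) = r" unfolding h_def
        using card_image[OF inj_on_subset[OF injf win[OF jW]]] r by simp
      ultimately have "h j \<in> Kedges r n" unfolding Kedges_def by simp
      moreover have "\<forall>x\<in>h j. blk x = g j"
      proof
        fix y assume "y \<in> h j"
        then obtain x where x: "x \<in> {j..j+r-1}" "y = f x" unfolding h_def by auto
        have "1 \<le> j" "j + r - 1 \<le> s" using win[OF jW] r by auto
        then have "g j \<le> g x" "g x \<le> g (j+r-1)" using x gmono by auto
        then show "blk y = g j" using gj x unfolding g_def by simp
      qed
      ultimately show ?thesis unfolding w_def by auto
    qed
    have "1 \<le> real (card Good) * (1 / real m)" using cG m by (simp add: field_simps)
    also have "\<dots> = (\<Sum>j\<in>Good. w (h j))" using wG by simp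
    also have "\<dots> \<le> (\<Sum>j\<in>W. w (h j))"
      by (rule sum_mono2) (auto simp: W_def Good_def w0)
    also have "\<dots> = (\<Sum>e\<in>h ` W. w e)" using sum.reindex[OF injh, of w] by simp
    finally show "1 \<le> (\<Sum>e\<in>(\<lambda>E. f ` E) ` path_edges r s. w e)" unfolding img .
  qed
  define F where "F = {e\<in>Kedges r n. \<exists>i. \<forall>x\<in>e. blk x = i}"
  define A where "A i = {i*q+1..i*q+q}" for i
  have FA: "F \<subseteq> (\<Union>i<m. {e. e \<subseteq> A i \<and> card e = r})"
  proof
    fix e assume "e \<in> F"
    then have eK: "e \<subseteq> {1..n}" "card e = r" and ei: "\<exists>i. \<forall>x\<in>e. blk x = i"
      unfolding F_def Kedges_def by auto
    then obtain i where i: "\<forall>x\<in>e. blk x = i" by blast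
    have "e \<noteq> {}" using eK r by auto
    then obtain x where x: "x \<in> e" by auto
    have "blk x \<le> (n - 1) div q" using eK x unfolding blk_def by (intro div_le_mono diff_le_mono) auto
    then have im: "i < m" using topb i x by simp
    have "e \<subseteq> A i"
    proof
      fix y assume y: "y \<in> e"
      then have y1: "1 \<le> y" and "(y - 1) div q = i" using eK i unfolding blk_def by auto
      note yi = \<open>(y - 1) div q = i\<close>
      have "i * q \<le> y - 1" using div_times_less_eq_dividend[of "y - 1" q] yi by metis
      moreover have "y - 1 < i * q + q" using dividend_less_div_times[OF q1, of "y - 1"] yi by simp
      ultimately have "i * q \<le> y - 1" "y - 1 < i * q + q" by auto
      then show "y \<in> A i" unfolding A_def using y1 by auto
    qed
    then show "e \<in> (\<Union>i<m. {e. e \<subseteq> A i \<and> card e = r})" using im eK by auto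
  qed
  have cF: "card F \<le> m * (q choose r)"
  proof -
    have "card F \<le> card (\<Union>i<m. {e. e \<subseteq> A i \<and> card e = r})"
      by (rule card_mono[OF _ FA]) (auto simp: A_def)
    also have "\<dots> \<le> (\<Sum>i<m. card {e. e \<subseteq> A i \<and> card e = r})" by (rule card_UN_le) simp
    also have "\<dots> = (\<Sum>i<m. q choose r)"
      by (rule sum.cong) (auto simp: n_subsets A_def)
    finally show ?thesis by simp
  qed
  have sumw: "(\<Sum>e\<in>Kedges r n. w e) \<le> real (q choose r)"
  proof -
    have "(\<Sum>e\<in>Kedges r n. w e) = (\<Sum>e\<in>F. 1 / real m)"
    proof -
      have "(\<Sum>e\<in>Kedges r n. w e) = (\<Sum>e\<in>Kedges r n. if e \<in> F then 1 / real m else 0)"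
        unfolding F_def w_def by (rule sum.cong) auto
      also have "\<dots> = (\<Sum>e\<in>F. 1 / real m)"
        using sum.inter_filter[OF finK, of "\<lambda>_. 1 / real m" "\<lambda>e. e \<in> F"]
        by (simp add: F_def)
      finally show ?thesis .
    qed
    also have "\<dots> = real (card F) / real m" by simp
    also have "\<dots> \<le> real (m * (q choose r)) / real m"
      using cF m by (intro divide_right_mono) (simp only: of_nat_le_iff, simp)
    also have "\<dots> = real (q choose r)" using m by simp
    finally show ?thesis .
  qed
  have bdd: "bdd_below {\<Sum>e\<in>Kedges r n. w e | w. frac_transversal r n s (path_edges r s) w}"
    unfolding bdd_below_def frac_transversal_def by (auto intro!: exI[of _ 0] sum_nonneg)
  have "tau_star r n s (path_edges r s) \<le> (\<Sum>e\<in>Kedges r n. w e)"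
    unfolding tau_star_def using tr by (intro cInf_lower[OF _ bdd]) auto
  then show ?thesis using sumw by simp
qed


theorem proposition3p2:
  fixes r s :: nat
  assumes "0 < r" and "0 < s" and "r dvd s"
  shows "\<forall>\<epsilon>>0. \<exists>N. \<forall>n\<ge>N.
           tau_star r n s (path_edges r s)
             \<le> ((real r / real s) ^ r + \<epsilon>) * real (n choose r)"
proof (intro allI impI)
  fix \<epsilon> :: real assume e: "0 < \<epsilon>"
  define m where "m = s div r"
  have s: "s = m * r" unfolding m_def using assms(3) by simp
  have m: "1 \<le> m" using s assms by (cases m) auto
  have r1: "1 \<le> r" using assms by simp
  have rs: "real r / real s = 1 / real m" using s assms by simp
  obtain N where N: "\<forall>n\<ge>N. (1 / real m + 1 / real n) ^ r \<le> (1 / real m) ^ r + \<epsilon>"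
    using asym[OF e] by blast
  show "\<exists>N. \<forall>n\<ge>N. tau_star r n s (path_edges r s)
             \<le> ((real r / real s) ^ r + \<epsilon>) * real (n choose r)"
  proof (intro exI allI impI)
    fix n assume n: "max N 1 \<le> n"
    define q where "q = (n + m - 1) div m"
    have n1: "1 \<le> n" using n by simp
    have "tau_star r n s (path_edges r s) \<le> real (q choose r)"
      by (rule tau_bound[OF r1 m s n1 q_def])
    also have "\<dots> \<le> (real q / real n) ^ r * real (n choose r)"
    proof (rule choose_ratio)
      show "0 < n" using n1 by simp
      have "n \<le> n * m" using m by simp
      moreover have "(n + 1) * m = n * m + m" by (simp add: algebra_simps)
      ultimately have "n + m - 1 < (n + 1) * m" using n1 m by linarith
      then show "q \<le> n" unfolding q_def using m
        by (simp add: div_less_iff_less_mult less_Suc_eq_le[symmetric])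
    qed
    also have "\<dots> \<le> (1 / real m + 1 / real n) ^ r * real (n choose r)"
    proof (intro mult_right_mono power_mono)
      have "real q * real m \<le> real (n + m - 1)"
        unfolding q_def by (metis div_times_less_eq_dividend of_nat_le_iff of_nat_mult)
      also have "\<dots> \<le> real n + real m" by simp
      finally have "real q * real m \<le> real n + real m" .
      then show "real q / real n \<le> 1 / real m + 1 / real n"
        using m n1 by (simp add: field_simps)
    qed auto
    also have "\<dots> \<le> ((1 / real m) ^ r + \<epsilon>) * real (n choose r)"
      using N n by (intro mult_right_mono) auto
    finally show "tau_star r n s (path_edges r s)
             \<le> ((real r / real s) ^ r + \<epsilon>) * real (n choose r)" unfolding rs .
  qed
qed

end
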